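(* Let $S$ be an integral domain of characteristic zero, and let $R$ be a subring of $S$ such that $(\mathbb{Q}.R)\cap S=R$. Then every monic polynomial $f\in R[x]$ of degree at least $2$ that is indecomposable over $R$ is also indecomposable over $S$; equivalently, if a monic $f\in R[x]$ can be written as $f=G(H(x))$ with $G,H\in S[x]$ both of degree at least $2$, then $f=g(h(x))$ for some $g,h\in R[x]$ both of degree at least $2$.
   Context: For a ring $A$ and $f\in A[x]$ with $\deg f\ge 2$, $f$ is called decomposable over $A$ if $f(x)=g(h(x))$ for some $g,h\in A[x]$ of degree at least $2$, and indecomposable over $A$ otherwise. $\mathbb{Q}.R$ denotes the subring of the fraction field of $S$ generated by $\mathbb{Q}$ and $R$, i.e. the set of elements $r/n$ with $r\in R$ and $n$ a positive integer. *)

theory Defs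
  imports "HOL-Computational_Algebra.Polynomial" "HOL-Computational_Algebra.Fraction_Field"
begin

definition is_subring :: "'a::comm_ring_1 set \<Rightarrow> bool" where
  "is_subring R \<longleftrightarrow> 0 \<in> R \<and> 1 \<in> R \<and> (\<forall>x\<in>R. \<forall>y\<in>R. x + y \<in> R \<and> x * y \<in> R) \<and> (\<forall>x\<in>R. - x \<in> R)"

definition poly_over :: "'a::comm_ring_1 set \<Rightarrow> 'a poly \<Rightarrow> bool" where
  "poly_over A p \<longleftrightarrow> (\<forall>i. coeff p i \<in> A)"

definition decomposable_over :: "'a::comm_ring_1 set \<Rightarrow> 'a poly \<Rightarrow> bool" where
  "decomposable_over A f \<longleftrightarrow>
     (\<exists>g h. poly_over A g \<and> poly_over A h \<and> degree g \<ge> 2 \<and> degree h \<ge> 2 \<and> f = pcompose g h)"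

text \<open>Q.R inside the fraction field of S: the elements r/n, r in R, n a positive integer.\<close>
definition QR :: "'a::idom set \<Rightarrow> 'a fract set" where
  "QR R = {Fract r (of_nat n) | r n. r \<in> R \<and> n > 0}"

definition embS :: "'a::idom \<Rightarrow> 'a fract" where
  "embS s = Fract s 1"

end

theory Submission
  imports Defs
begin


lemma pcompose_monom: "pcompose (monom a d) q = smult a (q ^ d)"
  by (induction d) (auto simp: monom_Suc pcompose_pCons monom_0)

lemma subring_sum:
  assumes "is_subring R" "finite A" "\<And>x. x \<in> A \<Longrightarrow> f x \<in> R"
  shows "sum f A \<in> R"
  using assms(2,3) by (induction A rule: finite_induct) (use assms(1) in \<open>auto simp: is_subring_def\<close>)

lemma poly_over_mult:
  assumes "is_subring R" "poly_over R p" "poly_over R q"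
  shows "poly_over R (p * q)"
  unfolding poly_over_def coeff_mult
  by (intro allI subring_sum[OF assms(1)]) (use assms in \<open>auto simp: is_subring_def poly_over_def\<close>)

lemma poly_over_add:
  assumes "is_subring R" "poly_over R p" "poly_over R q"
  shows "poly_over R (p + q)"
  using assms by (auto simp: is_subring_def poly_over_def)

lemma poly_over_diff:
  assumes "is_subring R" "poly_over R p" "poly_over R q"
  shows "poly_over R (p - q)"
proof -
  have "p - q = p + (- q)" by simp
  moreover have "poly_over R (-q)" using assms by (auto simp: is_subring_def poly_over_def)
  ultimately show ?thesis using poly_over_add[OF assms(1,2)] by metis
qed

lemma poly_over_one: "is_subring R \<Longrightarrow> poly_over R 1"
  by (auto simp: is_subring_def poly_over_def coeff_1)

lemma poly_over_power:
  assumes "is_subring R" "poly_over R p"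
  shows "poly_over R (p ^ n)"
  by (induction n) (auto intro: poly_over_mult poly_over_one assms)

lemma poly_over_smult:
  assumes "is_subring R" "a \<in> R" "poly_over R p"
  shows "poly_over R (smult a p)"
  using assms by (auto simp: is_subring_def poly_over_def)

lemma poly_over_monom:
  assumes "is_subring R" "a \<in> R"
  shows "poly_over R (monom a d)"
  using assms by (auto simp: is_subring_def poly_over_def coeff_monom)

lemma coeff_mult_top:
  fixes p q :: "'a::idom poly"
  assumes "degree p \<le> m" "degree q \<le> d"
  shows "coeff (p * q) (m + d) = coeff p m * coeff q d"
proof (cases "degree p = m \<and> degree q = d")
  case True then show ?thesis using coeff_mult_degree_sum[of p q] by simp
next
  case False
  then have "coeff p m = 0 \<or> coeff q d = 0" using assms by (auto simp: coeff_eq_0)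
  moreover have "coeff (p*q) (m+d) = 0"
  proof (cases "p = 0 \<or> q = 0")
    case True then show ?thesis by auto
  next
    case F: False
    then have "degree (p*q) < m + d" using False assms F by (auto simp add: degree_mult_eq)
    then show ?thesis by (simp add: coeff_eq_0)
  qed
  ultimately show ?thesis by auto
qed

lemma pow_top:
  fixes A :: "'a::idom poly"
  assumes "degree A \<le> s" "coeff A s = 1"
  shows "degree (A ^ i) \<le> i * s \<and> coeff (A ^ i) (i * s) = 1"
proof (induction i)
  case 0 then show ?case by simp
next
  case (Suc i)
  have "degree (A ^ Suc i) \<le> s + i * s"
    using Suc assms by (simp add: order_trans[OF degree_mult_le])
  moreover have "coeff (A * A ^ i) (s + i * s) = 1"
    using coeff_mult_top[OF assms(1), of "A^i" "i*s"] Suc assms by simp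
  ultimately show ?case by (simp add: add.commute)
qed



lemma coeff_pow_perturb:
  fixes A E :: "'a::idom poly"
  assumes dA: "degree A \<le> s" and cA: "coeff A s = 1" and dE: "degree E \<le> m" and ms: "m < s"
  shows "coeff ((A+E)^r) ((r-1)*s + m) = coeff (A^r) ((r-1)*s+m) + coeff E m * of_nat r"
proof -
  define S where "S = (\<Sum>i<r. A^(r - Suc i) * (A+E)^i)"
  have eq: "(A+E)^r - A^r = E * S"
    unfolding S_def using power_diff_sumr2[of "A+E" r A] by simp
  have dAE: "degree (A+E) \<le> s" using dA dE ms by (simp add: degree_add_le)
  have cAE: "coeff (A+E) s = 1" using cA dE ms by (simp add: coeff_eq_0)
  have trm: "degree (A^(r - Suc i) * (A+E)^i) \<le> (r-1)*s \<and> coeff (A^(r - Suc i) * (A+E)^i) ((r-1)*s) = 1"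
    if "i < r" for i
  proof -
    have e: "(r - Suc i)*s + i*s = (r-1)*s" using that by (simp add: add_mult_distrib[symmetric])
    note p1 = pow_top[OF dA cA, of "r - Suc i"] and p2 = pow_top[OF dAE cAE, of i]
    have "degree (A^(r - Suc i) * (A+E)^i) \<le> (r - Suc i)*s + i*s"
      using p1 p2 by (meson add_le_mono degree_mult_le order_trans)
    moreover have "coeff (A^(r - Suc i) * (A+E)^i) ((r - Suc i)*s + i*s) = 1"
      using coeff_mult_top[of "A^(r - Suc i)" "(r - Suc i)*s" "(A+E)^i" "i*s"] p1 p2 by simp
    ultimately show ?thesis using e by simp
  qed
  have dS: "degree S \<le> (r-1)*s" unfolding S_def by (rule degree_sum_le) (use trm in auto)
  have cS: "coeff S ((r-1)*s) = of_nat r" unfolding S_def coeff_sum using trm by simp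
  have "coeff ((A+E)^r - A^r) ((r-1)*s + m) = coeff E m * of_nat r"
    unfolding eq using coeff_mult_top[OF dE dS] cS by (simp add: add.commute)
  then show ?thesis by (simp add: algebra_simps)
qed

lemma poly_over_pcompose_rev:
  fixes q :: "'a::idom poly"
  assumes R: "is_subring R" and q: "poly_over R q" "lead_coeff q = 1" "degree q \<ge> 1"
  shows "poly_over R (pcompose p q) \<Longrightarrow> poly_over R p"
proof (induction "degree p" arbitrary: p rule: less_induct)
  case less
  define d where "d = degree p"
  define a where "a = lead_coeff p"
  have "lead_coeff (pcompose p q) = a"
    using lead_coeff_comp[of q p] q by (simp add: a_def)
  then have aR: "a \<in> R" using less.prems by (auto simp: poly_over_def)
  show ?case
  proof (cases "d = 0")
    case True
    then have "p = monom a 0" unfolding a_def d_def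
      by (auto simp: poly_eq_iff coeff_monom coeff_eq_0)
    then show ?thesis using poly_over_monom[OF R aR] by simp
  next
    case False
    define p' where "p' = p - monom a d"
    have "\<forall>j>d-1. coeff p' j = 0"
      unfolding p'_def a_def d_def using False by (auto simp: coeff_monom coeff_eq_0)
    then have dp': "degree p' < degree p" proof -
      have "degree p' \<le> d - 1" by (rule degree_le) fact
      then show ?thesis using False d_def by linarith
    qed
    have "pcompose p' q = pcompose p q - smult a (q ^ d)"
      unfolding p'_def by (simp add: pcompose_diff pcompose_monom)
    then have "poly_over R (pcompose p' q)"
      using poly_over_diff[OF R less.prems poly_over_smult[OF R aR poly_over_power[OF R q(1)]]] by simp
    then have "poly_over R p'" using less.hyps dp' by blast
    moreover have "p = p' + monom a d" unfolding p'_def by simp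
    ultimately show ?thesis using poly_over_add[OF R _ poly_over_monom[OF R aR]] by metis
  qed
qed

lemma QR_divide:
  fixes R :: "'a::{idom, ring_char_0} set"
  assumes QR: "QR R \<inter> range embS = embS ` R" and cr: "c * of_nat r \<in> R" and r: "r > 0"
  shows "c \<in> R"
proof -
  have "of_nat r \<noteq> (0::'a)" using r by simp
  then have "embS c = Fract (c * of_nat r) (of_nat r)"
    unfolding embS_def by (simp add: eq_fract)
  then have "embS c \<in> QR R" unfolding QR_def using cr r by blast
  then have "embS c \<in> embS ` R" using QR by blast
  then obtain x where "x \<in> R" "embS c = embS x" by blast
  then show ?thesis unfolding embS_def by (simp add: eq_fract)
qed

lemma poly_over_inner:
  fixes G H f :: "'a::{idom, ring_char_0} poly"
  assumes R: "is_subring R" and QR: "QR R \<inter> range embS = embS ` R"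
    and f: "poly_over R f" and fGH: "f = pcompose G H"
    and G: "lead_coeff G = 1" "degree G = r" "r \<ge> 1"
    and H: "lead_coeff H = 1" "degree H = s" "coeff H 0 = 0"
  shows "poly_over R H"
proof -
  have R0: "0 \<in> R" and R1: "1 \<in> R" using R unfolding is_subring_def by auto
  have Rdiff: "x - y \<in> R" if "x \<in> R" "y \<in> R" for x y
  proof -
    have "- y \<in> R" using R that unfolding is_subring_def by blast
    then have "x + - y \<in> R" using R that unfolding is_subring_def by blast
    then show ?thesis by simp
  qed
  have dGm: "degree (G - monom 1 r) \<le> r - 1"
  proof (rule degree_le, intro allI impI)
    fix j assume "r - 1 < j"
    then have "j = r \<or> j > r" using G(3) by linarith
    then show "coeff (G - monom 1 r) j = 0"
      using G by (auto simp: coeff_monom coeff_eq_0)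
  qed
  have fH: "f = H ^ r + pcompose (G - monom 1 r) H"
  proof -
    have "G = monom 1 r + (G - monom 1 r)" by simp
    then have "pcompose G H = pcompose (monom 1 r) H + pcompose (G - monom 1 r) H"
      by (metis pcompose_add)
    then show ?thesis unfolding fGH by (simp add: pcompose_monom)
  qed
  have dlow: "degree (pcompose (G - monom 1 r) H) \<le> (r-1) * s"
    using order_trans[OF degree_pcompose_le[of "G - monom 1 r" H] mult_le_mono1[OF dGm]] H(2) by simp
  have main: "\<forall>j \<ge> s - k. coeff H j \<in> R" if "k < s" for k
    using that
  proof (induction k)
    case 0
    show ?case
    proof (intro allI impI)
      fix j assume "s - 0 \<le> j"
      then have "j = s \<or> j > s" by linarith
      then show "coeff H j \<in> R" using H R0 R1 by (auto simp: coeff_eq_0)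
    qed
  next
    case (Suc k)
    define m where "m = s - Suc k"
    have m1: "m \<ge> 1" "m < s" "Suc m = s - k" using Suc.prems unfolding m_def by auto
    note IH = Suc.IH[OF Suc_lessD[OF Suc.prems]]
    define E where "E = poly_cutoff (Suc m) H"
    define A where "A = H - E"
    have cE: "coeff E j = (if j < Suc m then coeff H j else 0)" for j
      unfolding E_def by (simp add: coeff_poly_cutoff)
    have cA: "coeff A j = (if j < Suc m then 0 else coeff H j)" for j
      unfolding A_def using cE by simp
    have dE: "degree E \<le> m" by (rule degree_le) (simp add: cE)
    have dA: "degree A \<le> s" by (rule degree_le) (simp add: cA H(2) coeff_eq_0)
    have cAs: "coeff A s = 1" using cA m1 H by simp
    have pA: "poly_over R A" unfolding poly_over_def using IH m1 R0 by (auto simp: cA)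
    have HAE: "H = A + E" unfolding A_def by simp
    have key: "coeff (H^r) ((r-1)*s + m) = coeff (A^r) ((r-1)*s+m) + coeff H m * of_nat r"
    proof -
      have "coeff E m = coeff H m" using cE by simp
      then show ?thesis using coeff_pow_perturb[OF dA cAs dE m1(2), of r] unfolding HAE[symmetric] by simp
    qed
    have "coeff (pcompose (G - monom 1 r) H) ((r-1)*s + m) = 0"
      using dlow m1 by (intro coeff_eq_0) linarith
    then have "coeff f ((r-1)*s + m) = coeff (H^r) ((r-1)*s + m)" using fH by simp
    then have "coeff H m * of_nat r = coeff f ((r-1)*s + m) - coeff (A^r) ((r-1)*s+m)"
      using key by simp
    moreover have "coeff f ((r-1)*s + m) \<in> R" using f by (simp add: poly_over_def)
    moreover have "coeff (A^r) ((r-1)*s+m) \<in> R"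
      using poly_over_power[OF R pA] by (simp add: poly_over_def)
    ultimately have "coeff H m * of_nat r \<in> R" using Rdiff by simp
    then have "coeff H m \<in> R" using QR_divide[OF QR] G(3) by simp
    show ?case
    proof (intro allI impI)
      fix j assume "s - Suc k \<le> j"
      then have "j = m \<or> s - k \<le> j" unfolding m_def by linarith
      then show "coeff H j \<in> R" using IH \<open>coeff H m \<in> R\<close> by blast
    qed
  qed
  show ?thesis unfolding poly_over_def
  proof
    fix j
    show "coeff H j \<in> R"
    proof (cases "j = 0")
      case True then show ?thesis using H R0 by simp
    next
      case False
      have "s \<ge> 1"
      proof (rule ccontr)
        assume "\<not> s \<ge> 1"
        then have "s = 0" by simp
        then have "coeff H 0 = 1" using H by simp
        then show False using H by simp
      qed
      then show ?thesis using main[of "s - 1"] False by auto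
    qed
  qed
qed

theorem corollary2p2:
  fixes R :: "'a::{idom, ring_char_0} set" and f :: "'a poly"
  assumes "is_subring R"
    and "QR R \<inter> range embS = embS ` R"
    and "poly_over R f" and "lead_coeff f = 1" and "degree f \<ge> 2"
    and "decomposable_over (UNIV :: 'a set) f"
  shows "decomposable_over R f"
proof -
  obtain G H where dG: "degree G \<ge> 2" and dH: "degree H \<ge> 2" and fGH: "f = pcompose G H"
    using assms(6) unfolding decomposable_over_def by blast
  define r where "r = degree G"
  define s where "s = degree H"
  define u where "u = lead_coeff H"
  define w where "w = lead_coeff G * u ^ (r - 1)"
  define c0 where "c0 = coeff H 0"
  have "lead_coeff f = lead_coeff G * u ^ r"
    unfolding fGH u_def r_def using dH by (intro lead_coeff_comp) simp
  then have lc1: "lead_coeff G * u ^ r = 1" using assms(4) by simp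
  have uw: "u * w = 1"
  proof -
    have "u ^ r = u * u ^ (r - 1)" using dG r_def by (metis Suc_diff_1 less_le_trans pos2 power_Suc)
    then show ?thesis using lc1 unfolding w_def by (simp add: algebra_simps)
  qed
  then have w0: "w \<noteq> 0" and u0: "u \<noteq> 0" by auto
  define H' where "H' = smult w (H - [:c0:])"
  define G' where "G' = pcompose G [:c0, u:]"
  have cHc: "coeff (H - [:c0:]) j = (if j = 0 then 0 else coeff H j)" for j
    unfolding c0_def by (simp add: coeff_pCons split: nat.splits)
  have dHc: "degree (H - [:c0:]) = s"
  proof (rule antisym)
    show "degree (H - [:c0:]) \<le> s" by (rule degree_le) (simp add: cHc s_def coeff_eq_0)
    have "coeff (H - [:c0:]) s \<noteq> 0" using cHc dH s_def by auto
    then show "s \<le> degree (H - [:c0:])" by (rule le_degree)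
  qed
  have dH': "degree H' = s" unfolding H'_def using w0 dHc by simp
  have lH': "lead_coeff H' = 1" unfolding H'_def using dHc w0 cHc dH s_def uw u_def
    by (simp add: mult.commute)
  have cH'0: "coeff H' 0 = 0" unfolding H'_def using cHc[of 0] by (simp del: coeff_diff)
  have bk: "pcompose [:c0, u:] H' = H"
  proof -
    have "pcompose [:c0, u:] H' = [:c0:] + H' * [:u:]" by (simp add: pcompose_pCons)
    also have "H' * [:u:] = smult u H'" by (simp add: mult.commute)
    also have "smult u H' = H - [:c0:]" unfolding H'_def using uw by simp
    finally show ?thesis by simp
  qed
  have fG'H': "f = pcompose G' H'" 
  proof -
    have "pcompose G H = pcompose G (pcompose [:c0, u:] H')" by (simp only: bk)
    then show ?thesis unfolding G'_def fGH by (simp only: pcompose_assoc)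
  qed
  have dlin: "degree [:c0, u:] = 1" using u0 by simp
  have dG': "degree G' = r" unfolding G'_def r_def using dlin by (simp add: degree_pcompose)
  have lG': "lead_coeff G' = 1"
    unfolding G'_def using lead_coeff_comp[of "[:c0, u:]" G] dlin lc1 r_def by simp
  have pH': "poly_over R H'"
  proof -
    have "r \<ge> 1" using dG r_def by simp
    then show ?thesis using poly_over_inner[OF assms(1,2,3) fG'H' lG' dG' _ lH' dH' cH'0] by blast
  qed
  have pG': "poly_over R G'"
  proof -
    have "degree H' \<ge> 1" using dH' dH s_def by simp
    moreover have "poly_over R (pcompose G' H')" using assms(3) fG'H' by simp
    ultimately show ?thesis using poly_over_pcompose_rev[OF assms(1) pH' lH', of G'] by blast
  qed
  have "degree G' \<ge> 2" using dG' dG r_def by simp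
  moreover have "degree H' \<ge> 2" using dH' dH s_def by simp
  ultimately show ?thesis unfolding decomposable_over_def
    using pH' pG' fG'H' by blast
qed

end
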